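(* Let $G_m$ be a parametric regulatory network, $R$ a well-formed set of influence constraints, $v\in V$ and $P\in\mathbb P(G_m)$. Then $P\in\mathcal P_{(u,v,s)}$ for every $(u,v,s)\in R$ with $s\in\{-1,+1\}$ if and only if for all $\omega,\omega'\in\Omega_v$, $\omega\preceq_v\omega'$ implies $P_{v,\omega}\le P_{v,\omega'}$.
   Context: An influence graph is $G=(V,I)$, $V=\{1,\dots,n\}$, $I\subseteq V\times V$; regulators $n^-(v)=\{u\mid(u,v)\in I\}$. $m\in\mathbb N^n$, $D_v=\{0,\dots,m_v\}$, PRN $G_m=(G,m)$. Regulator states $\Omega_v=\prod_{u\in n^-(v)}D_u$; $\omega[u\leftarrow k]$ replaces component $u$ of $\omega$ by $k$. Parametrisations: vectors $P\in\mathbb P(G_m)$ with coordinates $P_{v,\omega}\in D_v$ for each $v\in V$, $\omega\in\Omega_v$. $R\subseteq V\times V\times\{+1,-1,\mathrm o\}$ is well-formed if $u\in n^-(v)$ for all $(u,v,c)\in R$ and never both $(u,v,+1),(u,v,-1)\in R$. $\mathcal P_{(u,v,+1)}=\{P\mid\forall\omega\in\Omega_v\forall x_u\in\{1..m_u\}:P_{v,\omega[u\leftarrow x_u]}\ge P_{v,\omega[u\leftarrow x_u-1]}\}$ and $\mathcal P_{(u,v,-1)}$ likewise with $\le$. The monotonicity order $\preceq_v$ on $\Omega_v$: $\omega\preceq_v\omega'$ iff for all $u\in n^-(v)$, $\omega_u\le\omega'_u$ if $(u,v,+1)\in R$, $\omega_u\ge\omega'_u$ if $(u,v,-1)\in R$,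 and $\omega_u=\omega'_u$ otherwise. *)

theory Defs
  imports Main "HOL-Library.FuncSet"
begin

(* Influence graph G = (V, I) with V = {1..n}; PRN G_m = (G, m). *)
definition influence_graph :: "nat \<Rightarrow> (nat \<times> nat) set \<Rightarrow> bool" where
  "influence_graph n I \<longleftrightarrow> I \<subseteq> {1..n} \<times> {1..n}"

definition regs :: "(nat \<times> nat) set \<Rightarrow> nat \<Rightarrow> nat set" where
  "regs I v = {u. (u, v) \<in> I}"

definition Omega :: "(nat \<times> nat) set \<Rightarrow> (nat \<Rightarrow> nat) \<Rightarrow> nat \<Rightarrow> (nat \<Rightarrow> nat) set" where
  "Omega I m v = (\<Pi>\<^sub>E u\<in>regs I v. {0..m u})"

definition parametrisations ::
  "nat \<Rightarrow> (nat \<times> nat) set \<Rightarrow> (nat \<Rightarrow> nat) \<Rightarrow> (nat \<Rightarrow> (nat \<Rightarrow> nat) \<Rightarrow> nat) set" where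
  "parametrisations n I m = {P. \<forall>v\<in>{1..n}. \<forall>\<omega>\<in>Omega I m v. P v \<omega> \<le> m v}"

datatype sgn = Plus | Minus | Obs

definition well_formed :: "(nat \<times> nat) set \<Rightarrow> (nat \<times> nat \<times> sgn) set \<Rightarrow> bool" where
  "well_formed I R \<longleftrightarrow> (\<forall>(u, v, c)\<in>R. u \<in> regs I v) \<and>
     (\<forall>u v. \<not> ((u, v, Plus) \<in> R \<and> (u, v, Minus) \<in> R))"

(* \<P>_{(u,v,s)} for s \<in> {+1,-1} (restricted to parametrisations by the caller) *)
definition constr_set ::
  "(nat \<times> nat) set \<Rightarrow> (nat \<Rightarrow> nat) \<Rightarrow> nat \<times> nat \<times> sgn \<Rightarrow> (nat \<Rightarrow> (nat \<Rightarrow> nat) \<Rightarrow> nat) set" where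
  "constr_set I m r = (case r of
     (u, v, Plus) \<Rightarrow> {P. \<forall>\<omega>\<in>Omega I m v. \<forall>x\<in>{1..m u}. P v (\<omega>(u := x)) \<ge> P v (\<omega>(u := x - 1))}
   | (u, v, Minus) \<Rightarrow> {P. \<forall>\<omega>\<in>Omega I m v. \<forall>x\<in>{1..m u}. P v (\<omega>(u := x)) \<le> P v (\<omega>(u := x - 1))}
   | (u, v, Obs) \<Rightarrow> UNIV)"

definition mono_le ::
  "(nat \<times> nat) set \<Rightarrow> (nat \<times> nat \<times> sgn) set \<Rightarrow> nat \<Rightarrow> (nat \<Rightarrow> nat) \<Rightarrow> (nat \<Rightarrow> nat) \<Rightarrow> bool" where
  "mono_le I R v \<omega> \<omega>' \<longleftrightarrow> (\<forall>u\<in>regs I v.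
     (if (u, v, Plus) \<in> R then \<omega> u \<le> \<omega>' u
      else if (u, v, Minus) \<in> R then \<omega> u \<ge> \<omega>' u
      else \<omega> u = \<omega>' u))"

end

theory Submission
  imports Defs
begin

lemma regs_finite: "influence_graph n I \<Longrightarrow> finite (regs I v)"
  unfolding influence_graph_def regs_def
  by (rule finite_subset[of _ "{1..n}"]) auto

lemma forward:
  assumes fin: "finite (regs I v)" and wf: "well_formed I R"
    and C: "\<forall>u s. (u, v, s) \<in> R \<and> s \<in> {Plus, Minus} \<longrightarrow> P \<in> constr_set I m (u, v, s)"
    and w': "\<omega>' \<in> Omega I m v"
  shows "\<forall>\<omega>\<in>Omega I m v. (\<Sum>u\<in>regs I v. (if \<omega> u \<le> \<omega>' u then \<omega>' u - \<omega> u else \<omega> u - \<omega>' u)) = k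
     \<longrightarrow> mono_le I R v \<omega> \<omega>' \<longrightarrow> P v \<omega> \<le> P v \<omega>'"
proof (induction k rule: nat_less_induct)
  case (1 k)
  define D where "D = (\<lambda>\<omega>. (\<Sum>u\<in>regs I v. (if \<omega> u \<le> \<omega>' u then \<omega>' u - \<omega> u else \<omega> u - \<omega>' u)))"
  show ?case
  proof (intro ballI impI)
    fix \<omega> assume w: "\<omega> \<in> Omega I m v" and Dk: "(\<Sum>u\<in>regs I v. (if \<omega> u \<le> \<omega>' u then \<omega>' u - \<omega> u else \<omega> u - \<omega>' u)) = k"
      and ml: "mono_le I R v \<omega> \<omega>'"
    show "P v \<omega> \<le> P v \<omega>'"
    proof (cases "\<omega> = \<omega>'")
      case True then show ?thesis by simp
    next
      case False
      then obtain u where u: "u \<in> regs I v" "\<omega> u \<noteq> \<omega>' u"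
        using w w' unfolding Omega_def by (metis PiE_ext)
      have wu: "\<omega> u \<le> m u" "\<omega>' u \<le> m u" using w w' u(1) unfolding Omega_def by auto
      have notboth: "\<not> ((u, v, Plus) \<in> R \<and> (u, v, Minus) \<in> R)" using wf unfolding well_formed_def by blast
      have "\<exists>\<omega>1. \<omega>1 \<in> Omega I m v \<and> P v \<omega> \<le> P v \<omega>1 \<and> mono_le I R v \<omega>1 \<omega>' \<and> D \<omega>1 < D \<omega>"
      proof (cases "(u, v, Plus) \<in> R")
        case True
        have lt: "\<omega> u < \<omega>' u" using ml u True unfolding mono_le_def by fastforce
        define \<omega>1 where "\<omega>1 = \<omega>(u := \<omega> u + 1)"
        have in1: "\<omega>1 \<in> Omega I m v" using w u(1) lt wu unfolding Omega_def \<omega>1_def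
          by (auto simp: PiE_iff extensional_def)
        have "P \<in> constr_set I m (u, v, Plus)" using C True by auto
        then have "P v (\<omega>(u := \<omega> u + 1)) \<ge> P v (\<omega>(u := \<omega> u + 1 - 1))"
          using w lt wu unfolding constr_set_def by (auto dest!: bspec[where x=\<omega>] bspec[where x="Suc (\<omega> u)"])
        then have le: "P v \<omega> \<le> P v \<omega>1" unfolding \<omega>1_def by simp
        have ml1: "mono_le I R v \<omega>1 \<omega>'" using ml lt True unfolding mono_le_def \<omega>1_def by auto
        have "D \<omega>1 < D \<omega>" unfolding D_def
          apply (rule sum_strict_mono_ex1[OF fin])
          using lt u(1) by (auto simp: \<omega>1_def)
        then show ?thesis using in1 le ml1 by blast
      next
        case False
        have M: "(u, v, Minus) \<in> R" using ml u False unfolding mono_le_def by (metis (no_types, lifting))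
        have lt: "\<omega>' u < \<omega> u" using ml u False M unfolding mono_le_def by (metis (no_types, lifting) le_neq_implies_less)
        define \<omega>1 where "\<omega>1 = \<omega>(u := \<omega> u - 1)"
        have in1: "\<omega>1 \<in> Omega I m v" using w u(1) lt wu unfolding Omega_def \<omega>1_def
          by (auto simp: PiE_iff extensional_def)
        have "P \<in> constr_set I m (u, v, Minus)" using C M by auto
        then have "P v (\<omega>(u := \<omega> u)) \<le> P v (\<omega>(u := \<omega> u - 1))"
          using w lt wu unfolding constr_set_def by (auto dest!: bspec[where x=\<omega>] bspec[where x="\<omega> u"])
        then have le: "P v \<omega> \<le> P v \<omega>1" unfolding \<omega>1_def by simp
        have ml1: "mono_le I R v \<omega>1 \<omega>'" using ml lt False M unfolding mono_le_def \<omega>1_def by auto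
        have "D \<omega>1 < D \<omega>" unfolding D_def
          apply (rule sum_strict_mono_ex1[OF fin])
          using lt u(1) by (auto simp: \<omega>1_def)
        then show ?thesis using in1 le ml1 by blast
      qed
      then obtain \<omega>1 where o1: "\<omega>1 \<in> Omega I m v" "P v \<omega> \<le> P v \<omega>1" "mono_le I R v \<omega>1 \<omega>'" "D \<omega>1 < D \<omega>"
        by blast
      have "D \<omega> = k" using Dk unfolding D_def .
      then have "P v \<omega>1 \<le> P v \<omega>'" using 1 o1 unfolding D_def by blast
      then show ?thesis using o1(2) by linarith
    qed
  qed
qed

theorem lemma1:
  fixes n :: nat and I :: "(nat \<times> nat) set" and m :: "nat \<Rightarrow> nat"
    and R :: "(nat \<times> nat \<times> sgn) set" and v :: nat
    and P :: "nat \<Rightarrow> (nat \<Rightarrow> nat) \<Rightarrow> nat"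
  assumes "influence_graph n I"
    and "well_formed I R"
    and "v \<in> {1..n}"
    and "P \<in> parametrisations n I m"
  shows "(\<forall>u s. (u, v, s) \<in> R \<and> s \<in> {Plus, Minus} \<longrightarrow> P \<in> constr_set I m (u, v, s))
     \<longleftrightarrow> (\<forall>\<omega>\<in>Omega I m v. \<forall>\<omega>'\<in>Omega I m v. mono_le I R v \<omega> \<omega>' \<longrightarrow> P v \<omega> \<le> P v \<omega>')"
proof
  assume C: "\<forall>u s. (u, v, s) \<in> R \<and> s \<in> {Plus, Minus} \<longrightarrow> P \<in> constr_set I m (u, v, s)"
  show "\<forall>\<omega>\<in>Omega I m v. \<forall>\<omega>'\<in>Omega I m v. mono_le I R v \<omega> \<omega>' \<longrightarrow> P v \<omega> \<le> P v \<omega>'"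
    using forward[OF regs_finite[OF assms(1)] assms(2) C] by blast
next
  assume M: "\<forall>\<omega>\<in>Omega I m v. \<forall>\<omega>'\<in>Omega I m v. mono_le I R v \<omega> \<omega>' \<longrightarrow> P v \<omega> \<le> P v \<omega>'"
  show "\<forall>u s. (u, v, s) \<in> R \<and> s \<in> {Plus, Minus} \<longrightarrow> P \<in> constr_set I m (u, v, s)"
  proof (intro allI impI)
    fix u s assume us: "(u, v, s) \<in> R \<and> s \<in> {Plus, Minus}"
    have ur: "u \<in> regs I v" using assms(2) us unfolding well_formed_def by blast
    have nb: "\<not> ((u, v, Plus) \<in> R \<and> (u, v, Minus) \<in> R)" using assms(2) unfolding well_formed_def by blast
    have inO: "\<omega>(u := y) \<in> Omega I m v" if "\<omega> \<in> Omega I m v" "y \<le> m u" for \<omega> y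
      using that ur unfolding Omega_def by (auto simp: PiE_iff extensional_def)
    show "P \<in> constr_set I m (u, v, s)"
    proof (cases "s = Plus")
      case True
      have "P v (\<omega>(u := x - 1)) \<le> P v (\<omega>(u := x))" if "\<omega> \<in> Omega I m v" "x \<in> {1..m u}" for \<omega> x
      proof -
        have "mono_le I R v (\<omega>(u := x - 1)) (\<omega>(u := x))"
          using us True unfolding mono_le_def by auto
        then show ?thesis using M inO that by auto
      qed
      then show ?thesis using True unfolding constr_set_def by auto
    next
      case False
      then have sM: "s = Minus" using us by auto
      have "P v (\<omega>(u := x)) \<le> P v (\<omega>(u := x - 1))" if "\<omega> \<in> Omega I m v" "x \<in> {1..m u}" for \<omega> x
      proof -
        have "mono_le I R v (\<omega>(u := x)) (\<omega>(u := x - 1))"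
          using us sM nb unfolding mono_le_def by auto
        then show ?thesis using M inO that by auto
      qed
      then show ?thesis using sM unfolding constr_set_def by auto
    qed
  qed
qed

end
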